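(* Let $E:[0,\infty)\times\mathbb{R}^2\to\mathbb{R}^2$ and $b:[0,\infty)\times\mathbb{R}^2\to\mathbb{R}$ be continuous, with $b(t,x)\neq 0$ for all $(t,x)$, and set $B(t,x)=b(t,x)\,e_3$. Fix $\Delta t>0$, $T>0$, set $t^n=n\Delta t$ and $N_T=\lfloor T/\Delta t\rfloor$. For each $\varepsilon>0$ let $(x^n_\varepsilon,v^n_\varepsilon)_{0\le n\le N_T}\subset\mathbb{R}^2\times\mathbb{R}^2$ satisfy, for $0\le n\le N_T-1$, the first-order semi-implicit scheme $$\frac{x^{n+1}_\varepsilon-x^n_\varepsilon}{\Delta t}=\frac{v^{n+1}_\varepsilon}{\varepsilon},\qquad \frac{v^{n+1}_\varepsilon-v^n_\varepsilon}{\Delta t}=\frac1\varepsilon\Big(\frac{v^{n+1}_\varepsilon}{\varepsilon}\wedge B(t^n,x^n_\varepsilon)+E(t^n,x^n_\varepsilon)\Big).$$ Assume that for every $1\le n\le N_T$ the family $(x^n_\varepsilon,\varepsilon v^n_\varepsilon)_{\varepsilon>0}$ is bounded uniformly in $\varepsilon$, and that $(x^0_\varepsilon,\varepsilon v^0_\varepsilon)\to(y^0,0)$ as $\varepsilon\to0$. Then for every $0\le n\le N_T$, $x^n_\varepsilon\to y^n$ as $\varepsilon\to0$, where $(y^n)$ is defined by the given $y^0$ and $$\frac{y^{n+1}-y^n}{\Delta t}=U(t^n,y^n),\qquad 0\le n\le N_T-1.$$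
   Context: Vectors of $\mathbb{R}^2$ are identified with vectors $(w_1,w_2,0)$ of $\mathbb{R}^3$, $e_3=(0,0,1)$, and $\wedge$ is the cross product; thus for $w\in\mathbb{R}^2$ and $B=b\,e_3$, $w\wedge B=b\,(w_2,-w_1)\in\mathbb{R}^2$. The guiding-center drift is $U(t,x)=\dfrac{E(t,x)\wedge B(t,x)}{\|B(t,x)\|^2}$. *)

theory Defs
  imports "HOL-Analysis.Analysis"
begin

text \<open>Vectors of R^2 are pairs (w1,w2), identified with (w1,w2,0) in R^3.
  For B = b e3, the cross product w \<and> B is b (w2, -w1).\<close>
definition wedge_e3 :: "real \<times> real \<Rightarrow> real \<Rightarrow> real \<times> real" where
  "wedge_e3 w b = (b * snd w, - (b * fst w))"

text \<open>Guiding-centre drift U = (E \<and> B) / |B|^2 with B = b e3, so |B| = |b|.\<close>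
definition drift :: "(real \<Rightarrow> real \<times> real \<Rightarrow> real \<times> real) \<Rightarrow> (real \<Rightarrow> real \<times> real \<Rightarrow> real)
    \<Rightarrow> real \<Rightarrow> real \<times> real \<Rightarrow> real \<times> real" where
  "drift E b t x = (1 / (norm (b t x))\<^sup>2) *\<^sub>R wedge_e3 (E t x) (b t x)"

end

theory Submission
  imports Defs
begin

theorem proposition3p1:
  fixes E :: "real \<Rightarrow> real \<times> real \<Rightarrow> real \<times> real"
    and b :: "real \<Rightarrow> real \<times> real \<Rightarrow> real"
    and dt T :: real
    and x v :: "real \<Rightarrow> nat \<Rightarrow> real \<times> real"
    and y :: "nat \<Rightarrow> real \<times> real"
    and y0 :: "real \<times> real"
  assumes E_cont: "continuous_on ({0..} \<times> UNIV) (\<lambda>(t, z). E t z)"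
    and b_cont: "continuous_on ({0..} \<times> UNIV) (\<lambda>(t, z). b t z)"
    and b_nz: "\<And>t z. t \<ge> 0 \<Longrightarrow> b t z \<noteq> 0"
    and dt_pos: "dt > 0" and T_pos: "T > 0"
    and scheme_x: "\<And>\<epsilon> n. \<epsilon> > 0 \<Longrightarrow> n < nat \<lfloor>T / dt\<rfloor> \<Longrightarrow>
        (1 / dt) *\<^sub>R (x \<epsilon> (Suc n) - x \<epsilon> n) = (1 / \<epsilon>) *\<^sub>R v \<epsilon> (Suc n)"
    and scheme_v: "\<And>\<epsilon> n. \<epsilon> > 0 \<Longrightarrow> n < nat \<lfloor>T / dt\<rfloor> \<Longrightarrow>
        (1 / dt) *\<^sub>R (v \<epsilon> (Suc n) - v \<epsilon> n) =
        (1 / \<epsilon>) *\<^sub>R (wedge_e3 ((1 / \<epsilon>) *\<^sub>R v \<epsilon> (Suc n)) (b (real n * dt) (x \<epsilon> n))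
                        + E (real n * dt) (x \<epsilon> n))"
    and bounded: "\<And>n. 1 \<le> n \<Longrightarrow> n \<le> nat \<lfloor>T / dt\<rfloor> \<Longrightarrow>
        \<exists>C. \<forall>\<epsilon>>0. norm (x \<epsilon> n) \<le> C \<and> norm (\<epsilon> *\<^sub>R v \<epsilon> n) \<le> C"
    and init: "((\<lambda>\<epsilon>. (x \<epsilon> 0, \<epsilon> *\<^sub>R v \<epsilon> 0)) \<longlongrightarrow> (y0, 0)) (at_right 0)"
    and y_0: "y 0 = y0"
    and y_rec: "\<And>n. n < nat \<lfloor>T / dt\<rfloor> \<Longrightarrow>
        (1 / dt) *\<^sub>R (y (Suc n) - y n) = drift E b (real n * dt) (y n)"
  shows "\<forall>n \<le> nat \<lfloor>T / dt\<rfloor>. ((\<lambda>\<epsilon>. x \<epsilon> n) \<longlongrightarrow> y n) (at_right 0)"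
proof -
  define N where "N = nat \<lfloor>T / dt\<rfloor>"
  have evpos: "eventually (\<lambda>\<epsilon>::real. \<epsilon> > 0) (at_right 0)"
    by (simp add: eventually_at_right_less)
  have main: "n \<le> N \<Longrightarrow> ((\<lambda>\<epsilon>. x \<epsilon> n) \<longlongrightarrow> y n) (at_right 0) \<and>
      ((\<lambda>\<epsilon>. \<epsilon> *\<^sub>R v \<epsilon> n) \<longlongrightarrow> 0) (at_right 0)" for n
  proof (induction n)
    case 0
    show ?case using tendsto_fst[OF init] tendsto_snd[OF init] y_0 by simp
  next
    case (Suc n)
    then have nN: "n < N" by simp
    from Suc have X: "((\<lambda>\<epsilon>. x \<epsilon> n) \<longlongrightarrow> y n) (at_right 0)"
      and W: "((\<lambda>\<epsilon>. \<epsilon> *\<^sub>R v \<epsilon> n) \<longlongrightarrow> 0) (at_right 0)" by auto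
    obtain C where C: "\<And>\<epsilon>. \<epsilon> > 0 \<Longrightarrow> norm (x \<epsilon> (Suc n)) \<le> C"
      using bounded[of "Suc n"] Suc.prems unfolding N_def by auto
    have wexpr: "\<epsilon> *\<^sub>R v \<epsilon> (Suc n) = (\<epsilon>*\<epsilon>/dt) *\<^sub>R (x \<epsilon> (Suc n) - x \<epsilon> n)"
      if "\<epsilon> > 0" for \<epsilon>
    proof -
      have h: "(1 / \<epsilon>) *\<^sub>R v \<epsilon> (Suc n) = (1 / dt) *\<^sub>R (x \<epsilon> (Suc n) - x \<epsilon> n)"
        using scheme_x[OF that nN[unfolded N_def]] by simp
      have "v \<epsilon> (Suc n) = \<epsilon> *\<^sub>R ((1 / \<epsilon>) *\<^sub>R v \<epsilon> (Suc n))" using that by simp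
      also have "\<dots> = \<epsilon> *\<^sub>R ((1 / dt) *\<^sub>R (x \<epsilon> (Suc n) - x \<epsilon> n))" using h by simp
      finally show ?thesis by simp
    qed
    have W': "((\<lambda>\<epsilon>. \<epsilon> *\<^sub>R v \<epsilon> (Suc n)) \<longlongrightarrow> 0) (at_right 0)"
    proof (rule Lim_null_comparison)
      show "eventually (\<lambda>\<epsilon>. norm (\<epsilon> *\<^sub>R v \<epsilon> (Suc n)) \<le> (\<epsilon>*\<epsilon>/dt) * (C + norm (x \<epsilon> n))) (at_right 0)"
        using evpos
      proof eventually_elim
        case (elim \<epsilon>)
        have "norm (\<epsilon> *\<^sub>R v \<epsilon> (Suc n)) = (\<epsilon>*\<epsilon>/dt) * norm (x \<epsilon> (Suc n) - x \<epsilon> n)"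
          using wexpr[OF elim] elim dt_pos by simp
        also have "\<dots> \<le> (\<epsilon>*\<epsilon>/dt) * (C + norm (x \<epsilon> n))"
          apply (rule mult_left_mono)
          using C[OF elim] norm_triangle_ineq4[of "x \<epsilon> (Suc n)" "x \<epsilon> n"] dt_pos by auto
        finally show ?case .
      qed
      have "((\<lambda>\<epsilon>. (\<epsilon>*\<epsilon>/dt) * (C + norm (x \<epsilon> n))) \<longlongrightarrow> (0*0/dt) * (C + norm (y n))) (at_right 0)"
        using dt_pos by (intro tendsto_intros X) auto
      then show "((\<lambda>\<epsilon>. (\<epsilon>*\<epsilon>/dt) * (C + norm (x \<epsilon> n))) \<longlongrightarrow> 0) (at_right 0)" by simp
    qed
    define t where "t = real n * dt"
    have t0: "t \<ge> 0" unfolding t_def using dt_pos by simp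
    define R where "R = (\<lambda>\<epsilon>. (1/dt) *\<^sub>R (\<epsilon> *\<^sub>R v \<epsilon> (Suc n) - \<epsilon> *\<^sub>R v \<epsilon> n))"
    define G where "G = (\<lambda>\<epsilon>. x \<epsilon> n + dt *\<^sub>R
       (- (snd (R \<epsilon>) - snd (E t (x \<epsilon> n))) / b t (x \<epsilon> n),
        (fst (R \<epsilon>) - fst (E t (x \<epsilon> n))) / b t (x \<epsilon> n)))"
    have xG: "x \<epsilon> (Suc n) = G \<epsilon>" if ep: "\<epsilon> > 0" for \<epsilon>
    proof -
      define D where "D = (1/dt) *\<^sub>R (x \<epsilon> (Suc n) - x \<epsilon> n)"
      have D1: "(1 / \<epsilon>) *\<^sub>R v \<epsilon> (Suc n) = D"
        using scheme_x[OF ep nN[unfolded N_def]] unfolding D_def by simp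
      have sv: "(1 / dt) *\<^sub>R (v \<epsilon> (Suc n) - v \<epsilon> n) =
        (1 / \<epsilon>) *\<^sub>R (wedge_e3 D (b t (x \<epsilon> n)) + E t (x \<epsilon> n))"
        using scheme_v[OF ep nN[unfolded N_def]] D1 unfolding t_def by simp
      have "R \<epsilon> = \<epsilon> *\<^sub>R ((1 / dt) *\<^sub>R (v \<epsilon> (Suc n) - v \<epsilon> n))"
        unfolding R_def by (simp add: algebra_simps)
      also have "\<dots> = wedge_e3 D (b t (x \<epsilon> n)) + E t (x \<epsilon> n)" using sv ep by simp
      finally have RR: "R \<epsilon> = wedge_e3 D (b t (x \<epsilon> n)) + E t (x \<epsilon> n)" .
      have bn: "b t (x \<epsilon> n) \<noteq> 0" using b_nz t0 by auto
      have Deq: "D = (- (snd (R \<epsilon>) - snd (E t (x \<epsilon> n))) / b t (x \<epsilon> n),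
        (fst (R \<epsilon>) - fst (E t (x \<epsilon> n))) / b t (x \<epsilon> n))"
        using RR bn by (auto simp: wedge_e3_def prod_eq_iff field_simps)
      have "x \<epsilon> (Suc n) = x \<epsilon> n + dt *\<^sub>R D" unfolding D_def using dt_pos by simp
      then show ?thesis unfolding G_def Deq by simp
    qed
    have Rlim: "(R \<longlongrightarrow> 0) (at_right 0)"
    proof -
      have "(R \<longlongrightarrow> (1/dt) *\<^sub>R (0 - 0)) (at_right 0)" unfolding R_def
        by (intro tendsto_intros W W')
      then show ?thesis by simp
    qed
    have tx: "((\<lambda>\<epsilon>. (t, x \<epsilon> n)) \<longlongrightarrow> (t, y n)) (at_right 0)"
      by (intro tendsto_intros X)
    have Elim: "((\<lambda>\<epsilon>. E t (x \<epsilon> n)) \<longlongrightarrow> E t (y n)) (at_right 0)"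
      using continuous_on_tendsto_compose[OF E_cont tx] t0 by auto
    have blim: "((\<lambda>\<epsilon>. b t (x \<epsilon> n)) \<longlongrightarrow> b t (y n)) (at_right 0)"
      using continuous_on_tendsto_compose[OF b_cont tx] t0 by auto
    have bny: "b t (y n) \<noteq> 0" using b_nz t0 by auto
    have "(G \<longlongrightarrow> y n + dt *\<^sub>R
       (- (snd (0::real\<times>real) - snd (E t (y n))) / b t (y n),
        (fst (0::real\<times>real) - fst (E t (y n))) / b t (y n))) (at_right 0)"
      unfolding G_def by (intro tendsto_intros X Rlim Elim blim bny)
    moreover have "y (Suc n) = y n + dt *\<^sub>R
       (- (snd (0::real\<times>real) - snd (E t (y n))) / b t (y n),
        (fst (0::real\<times>real) - fst (E t (y n))) / b t (y n))"
    proof -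
      have "(1 / dt) *\<^sub>R (y (Suc n) - y n) = drift E b t (y n)"
        using y_rec nN unfolding N_def t_def by simp
      then have "y (Suc n) = y n + dt *\<^sub>R drift E b t (y n)" using dt_pos
        by (metis (no_types, lifting) add.commute diff_add_cancel divide_inverse_commute
            inverse_eq_divide order_less_irrefl scaleR_one scaleR_scaleR mult.commute right_inverse)
      moreover have "drift E b t (y n) = (- (snd (0::real\<times>real) - snd (E t (y n))) / b t (y n),
        (fst (0::real\<times>real) - fst (E t (y n))) / b t (y n))"
        using bny by (simp add: drift_def wedge_e3_def prod_eq_iff power2_eq_square field_simps)
      ultimately show ?thesis by simp
    qed
    ultimately have "((\<lambda>\<epsilon>. x \<epsilon> (Suc n)) \<longlongrightarrow> y (Suc n)) (at_right 0)"
      using Lim_transform_eventually[of G] xG evpos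
      by (smt (verit, ccfv_threshold) eventually_mono tendsto_cong)
    with W' show ?case by simp
  qed
  show ?thesis using main unfolding N_def by blast
qed

end
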